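(* Let $A=[a_{ij}]_{i,j=1}^n$ be the transition matrix of a Markov chain on $n$ states (so $a_{ij}\ge 0$ and each row of $A$ sums to $1$). For each positive integer $N$, let $\mu_0^{(N)}\in\mathbb{N}^n$ be a distribution of $N$ particles (nonnegative integer entries summing to $N$), and let $M^{(N)}=[m^{(N)}_{ij}]\in\mathbb{N}^{n\times n}$ be a matrix with nonnegative integer entries such that $M^{(N)}\mathbf{1}=\mu_0^{(N)}$ and $\mathrm{supp}(M^{(N)})\subseteq \mathrm{supp}(\mathrm{diag}(\mu_0^{(N)})A)$. Then there exists a constant $C>0$ such that for all $N$, \[ \left|\log\!\left(P_{\mu_0^{(N)},A}(M^{(N)})\right)+H\!\left(M^{(N)}\,\middle|\,\mathrm{diag}(\mu_0^{(N)})A\right)\right|\le C\log(N). \]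
   Context: $\mathbf{1}$ denotes the $n\times 1$ vector of ones; $\mathrm{supp}(\cdot)$ of a matrix is the set of indices of its nonzero entries. For $\mu_0\in\mathbb{N}^n$ and $M\in\mathbb{N}^{n\times n}$ with $M\mathbf{1}=\mu_0$, the probability of the mass transfer matrix $M$ (where $m_{ij}$ is the number of particles moving from state $i$ to state $j$ when each particle independently moves according to $A$) is \[ P_{\mu_0,A}(M)=\prod_{i=1}^n\left(\binom{(\mu_0)_i}{m_{i1},m_{i2},\dots,m_{in}}\prod_{j=1}^n a_{ij}^{m_{ij}}\right), \] with multinomial coefficients. For nonnegative vectors or matrices $p,q$ of the same dimension, the Kullback–Leibler divergence is $H(p|q)=\sum_i p_i\log(p_i/q_i)$, with the convention $0\log 0=0$. *)

theory Defs
  imports "HOL-Analysis.Analysis"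
begin

definition stochastic :: "('n::finite \<Rightarrow> 'n \<Rightarrow> real) \<Rightarrow> bool" where
  "stochastic A \<longleftrightarrow> (\<forall>i j. A i j \<ge> 0) \<and> (\<forall>i. (\<Sum>j\<in>UNIV. A i j) = 1)"

definition multinom :: "nat \<Rightarrow> ('n::finite \<Rightarrow> nat) \<Rightarrow> real" where
  "multinom m k = fact m / (\<Prod>j\<in>UNIV. fact (k j))"

definition transfer_prob :: "('n::finite \<Rightarrow> nat) \<Rightarrow> ('n \<Rightarrow> 'n \<Rightarrow> real) \<Rightarrow> ('n \<Rightarrow> 'n \<Rightarrow> nat) \<Rightarrow> real" where
  "transfer_prob mu0 A M =
     (\<Prod>i\<in>UNIV. multinom (mu0 i) (M i) * (\<Prod>j\<in>UNIV. A i j ^ M i j))"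

definition KL :: "('n::finite \<Rightarrow> 'n \<Rightarrow> real) \<Rightarrow> ('n \<Rightarrow> 'n \<Rightarrow> real) \<Rightarrow> real" where
  "KL p q = (\<Sum>i\<in>UNIV. \<Sum>j\<in>UNIV. if p i j = 0 then 0 else p i j * ln (p i j / q i j))"

definition diag_mul :: "('n::finite \<Rightarrow> nat) \<Rightarrow> ('n \<Rightarrow> 'n \<Rightarrow> real) \<Rightarrow> 'n \<Rightarrow> 'n \<Rightarrow> real" where
  "diag_mul mu0 A i j = real (mu0 i) * A i j"

end

theory Submission
  imports Defs
begin

definition ee :: "nat \<Rightarrow> real" where
  "ee k = ln (fact k) - real k * ln (real k) + real k"

lemma ee_0: "ee 0 = 0" by (simp add: ee_def)
lemma ee_1: "ee 1 = 1" by (simp add: ee_def)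

lemma ee_Suc: "ee (Suc k) = ee k + 1 - real k * (ln (real k + 1) - ln (real k))"
proof -
  have "ln (fact (Suc k) :: real) = ln (real k + 1) + ln (fact k)"
    by (simp add: ln_mult add.commute)
  then show ?thesis unfolding ee_def by (simp add: algebra_simps)
qed

lemma ln_step_bounds:
  assumes "k \<ge> 1"
  shows "real k * (ln (real k + 1) - ln (real k)) \<le> 1"
    and "(real k + 1) * (ln (real k + 1) - ln (real k)) \<ge> 1"
proof -
  have kp: "real k > 0" using assms by simp
  have d1: "ln (real k + 1) - ln (real k) = ln ((real k + 1) / real k)"
    using kp by (simp add: ln_div)
  have "ln ((real k + 1) / real k) \<le> (real k + 1) / real k - 1"
    using kp by (intro ln_le_minus_one) simp
  also have "\<dots> = 1 / real k" using kp by (simp add: field_simps)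
  finally have "ln (real k + 1) - ln (real k) \<le> 1 / real k" using d1 by simp
  then have "real k * (ln (real k + 1) - ln (real k)) \<le> real k * (1 / real k)"
    using kp by (intro mult_left_mono) auto
  then show "real k * (ln (real k + 1) - ln (real k)) \<le> 1" using kp by simp
  have d2: "ln (real k + 1) - ln (real k) = - ln (real k / (real k + 1))"
    using kp by (simp add: ln_div)
  have "ln (real k / (real k + 1)) \<le> real k / (real k + 1) - 1"
    using kp by (intro ln_le_minus_one) simp
  also have "\<dots> = - 1 / (real k + 1)" using kp by (simp add: field_simps)
  finally have "ln (real k + 1) - ln (real k) \<ge> 1 / (real k + 1)" using d2 by simp
  then have "(real k + 1) * (ln (real k + 1) - ln (real k)) \<ge> (real k + 1) * (1 / (real k + 1))"
    using kp by (intro mult_left_mono) auto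
  then show "(real k + 1) * (ln (real k + 1) - ln (real k)) \<ge> 1" using kp by simp
qed

lemma ee_bounds: "k \<ge> 1 \<Longrightarrow> 1 \<le> ee k \<and> ee k \<le> 1 + ln (real k)"
proof (induction k rule: dec_induct)
  case base then show ?case using ee_1 by simp
next
  case (step k)
  note b = ln_step_bounds[OF step(1)]
  show ?case using step.IH b by (simp add: ee_Suc algebra_simps)
qed

lemma ee_bound: "k \<le> N \<Longrightarrow> N \<ge> 1 \<Longrightarrow> 0 \<le> ee k \<and> ee k \<le> 1 + ln (real N)"
proof (cases "k = 0")
  case True
  assume "N \<ge> 1" then show ?thesis using True by (simp add: ee_0)
next
  case False
  assume a: "k \<le> N" "N \<ge> 1"
  then have "ln (real k) \<le> ln (real N)" using False by simp
  then show ?thesis using ee_bounds[of k] False by auto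
qed


lemma ln2_ge: "ln (2::real) \<ge> 1/2"
  using ln_step_bounds(2)[of 1] by simp

lemma row_identity:
  fixes m :: nat and r :: "'n::finite \<Rightarrow> nat" and a :: "'n \<Rightarrow> real"
  assumes sr: "(\<Sum>j\<in>UNIV. r j) = m" and pa: "\<And>j. r j \<noteq> 0 \<Longrightarrow> a j > 0"
  shows "ln (multinom m r * (\<Prod>j\<in>UNIV. a j ^ r j))
     + (\<Sum>j\<in>UNIV. if real (r j) = 0 then 0 else real (r j) * ln (real (r j) / (real m * a j)))
     = ee m - (\<Sum>j\<in>UNIV. ee (r j))"
proof -
  have fpos: "(\<Prod>j\<in>UNIV. fact (r j) :: real) > 0" by (intro prod_pos) auto
  have mpos: "multinom m r > 0" unfolding multinom_def using fpos by simp
  have apos: "\<And>j. a j ^ r j > 0" using pa by (metis gr0I power_0 zero_less_one zero_less_power)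
  have ppos: "(\<Prod>j\<in>UNIV. a j ^ r j) > 0" using apos by (intro prod_pos) auto
  have rle: "\<And>j. r j \<le> m" using sr by (metis finite UNIV_I member_le_sum zero_le)
  have l1: "ln (multinom m r) = ln (fact m) - (\<Sum>j\<in>UNIV. ln (fact (r j)))"
    unfolding multinom_def using fpos by (simp add: ln_div ln_prod)
  have l2: "ln (\<Prod>j\<in>UNIV. a j ^ r j) = (\<Sum>j\<in>UNIV. real (r j) * ln (a j))"
  proof -
    have "ln (\<Prod>j\<in>UNIV. a j ^ r j) = (\<Sum>j\<in>UNIV. ln (a j ^ r j))"
      by (rule ln_prod, simp, metis apos less_irrefl)
    then show ?thesis by (simp add: ln_realpow)
  qed
  have l3: "(\<Sum>j\<in>UNIV. if real (r j) = 0 then 0 else real (r j) * ln (real (r j) / (real m * a j)))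
     = (\<Sum>j\<in>UNIV. real (r j) * ln (real (r j)) - real (r j) * ln (real m) - real (r j) * ln (a j))"
  proof (rule sum.cong[OF refl])
    fix j
    show "(if real (r j) = 0 then 0 else real (r j) * ln (real (r j) / (real m * a j)))
       = real (r j) * ln (real (r j)) - real (r j) * ln (real m) - real (r j) * ln (a j)"
    proof (cases "r j = 0")
      case False
      then have "a j > 0" "m > 0" using pa rle[of j] by auto
      then show ?thesis using False by (simp add: ln_div ln_mult algebra_simps)
    qed simp
  qed
  have s2: "(\<Sum>j\<in>UNIV. real (r j)) = real m" using sr by (metis of_nat_sum)
  have s1: "(\<Sum>j\<in>UNIV. real (r j) * ln (real m)) = real m * ln (real m)"
    by (simp add: sum_distrib_right[symmetric] s2)
  show ?thesis
  proof -
    have lm: "ln (multinom m r * (\<Prod>j\<in>UNIV. a j ^ r j)) = ln (multinom m r) + ln (\<Prod>j\<in>UNIV. a j ^ r j)"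
      by (rule ln_mult_pos[OF mpos ppos])
    have e: "ee m - (\<Sum>j\<in>UNIV. ee (r j)) = ln (fact m) - real m * ln (real m) + real m
       - ((\<Sum>j\<in>UNIV. ln (fact (r j))) - (\<Sum>j\<in>UNIV. real (r j) * ln (real (r j))) + (\<Sum>j\<in>UNIV. real (r j)))"
      unfolding ee_def by (simp only: sum.distrib sum_subtractf)
    have k: "(\<Sum>j\<in>UNIV. real (r j) * ln (real (r j)) - real (r j) * ln (real m) - real (r j) * ln (a j))
       = (\<Sum>j\<in>UNIV. real (r j) * ln (real (r j))) - (\<Sum>j\<in>UNIV. real (r j) * ln (real m)) - (\<Sum>j\<in>UNIV. real (r j) * ln (a j))"
      by (simp only: sum_subtractf)
    show ?thesis unfolding lm l1 l2 l3 e k s1 s2 by linarith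
  qed
qed

theorem proposition1:
  fixes A :: "'n::finite \<Rightarrow> 'n \<Rightarrow> real"
    and mu0 :: "nat \<Rightarrow> 'n \<Rightarrow> nat"
    and M :: "nat \<Rightarrow> 'n \<Rightarrow> 'n \<Rightarrow> nat"
  assumes "stochastic A"
    and "\<And>N. N \<ge> 1 \<Longrightarrow> (\<Sum>i\<in>UNIV. mu0 N i) = N"
    and "\<And>N i. N \<ge> 1 \<Longrightarrow> (\<Sum>j\<in>UNIV. M N i j) = mu0 N i"
    and "\<And>N i j. N \<ge> 1 \<Longrightarrow> M N i j \<noteq> 0 \<Longrightarrow> diag_mul (mu0 N) A i j \<noteq> 0"
  shows "\<exists>C>0. \<forall>N\<ge>1. \<bar>ln (transfer_prob (mu0 N) A (M N))
                          + KL (\<lambda>i j. real (M N i j)) (diag_mul (mu0 N) A)\<bar> \<le> C * ln (real N)"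
proof -
  define n where "n = real CARD('n)"
  have n1: "n \<ge> 1" unfolding n_def by simp
  have Anonneg: "\<And>i j. A i j \<ge> 0" using assms(1) unfolding stochastic_def by auto
  have key: "ln (transfer_prob (mu0 N) A (M N)) + KL (\<lambda>i j. real (M N i j)) (diag_mul (mu0 N) A)
      = (\<Sum>i\<in>UNIV. ee (mu0 N i) - (\<Sum>j\<in>UNIV. ee (M N i j)))" if N: "N \<ge> 1" for N
  proof -
    have pa: "\<And>i j. M N i j \<noteq> 0 \<Longrightarrow> A i j > 0"
      using assms(4)[OF N] Anonneg unfolding diag_mul_def
      by (metis less_eq_real_def mult_zero_right)
    have rows: "\<And>i. ln (multinom (mu0 N i) (M N i) * (\<Prod>j\<in>UNIV. A i j ^ M N i j))
     + (\<Sum>j\<in>UNIV. if real (M N i j) = 0 then 0 else real (M N i j) * ln (real (M N i j) / (real (mu0 N i) * A i j)))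
     = ee (mu0 N i) - (\<Sum>j\<in>UNIV. ee (M N i j))"
      by (rule row_identity) (use assms(3)[OF N] pa in auto)
    have fpos: "\<And>i. multinom (mu0 N i) (M N i) * (\<Prod>j\<in>UNIV. A i j ^ M N i j) > 0"
    proof -
      fix i
      have f: "(\<Prod>j\<in>UNIV. fact (M N i j) :: real) > 0" by (intro prod_pos) auto
      have "\<And>j. A i j ^ M N i j > 0" using pa by (metis gr0I power_0 zero_less_one zero_less_power)
      then have "(\<Prod>j\<in>UNIV. A i j ^ M N i j) > 0" by (intro prod_pos) auto
      then show "multinom (mu0 N i) (M N i) * (\<Prod>j\<in>UNIV. A i j ^ M N i j) > 0"
        using f unfolding multinom_def by simp
    qed
    have "ln (transfer_prob (mu0 N) A (M N)) = (\<Sum>i\<in>UNIV. ln (multinom (mu0 N i) (M N i) * (\<Prod>j\<in>UNIV. A i j ^ M N i j)))"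
      unfolding transfer_prob_def
      by (rule ln_prod, simp, metis fpos less_irrefl)
    moreover have "KL (\<lambda>i j. real (M N i j)) (diag_mul (mu0 N) A) = (\<Sum>i\<in>UNIV. \<Sum>j\<in>UNIV. if real (M N i j) = 0 then 0 else real (M N i j) * ln (real (M N i j) / (real (mu0 N i) * A i j)))"
      unfolding KL_def diag_mul_def by simp
    ultimately show ?thesis using rows by (simp add: sum.distrib[symmetric])
  qed
  have mule: "\<And>N i. N \<ge> 1 \<Longrightarrow> mu0 N i \<le> N"
    using assms(2) by (metis finite UNIV_I member_le_sum zero_le)
  have Mle: "\<And>N i j. N \<ge> 1 \<Longrightarrow> M N i j \<le> mu0 N i"
    using assms(3) by (metis finite UNIV_I member_le_sum zero_le)
  show ?thesis
  proof (intro exI[of _ "3 * n * (n + 1)"] conjI allI impI)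
    show "0 < 3 * n * (n + 1)" using n1 by simp
    fix N :: nat assume N: "N \<ge> 1"
    show "\<bar>ln (transfer_prob (mu0 N) A (M N)) + KL (\<lambda>i j. real (M N i j)) (diag_mul (mu0 N) A)\<bar> \<le> 3 * n * (n + 1) * ln (real N)"
    proof (cases "N = 1")
      case True
      have e01: "\<And>k. k \<le> 1 \<Longrightarrow> ee k = real k" using ee_0 ee_1 by (metis le_Suc_eq le_zero_eq One_nat_def of_nat_0 of_nat_1)
      have "(\<Sum>i\<in>UNIV. ee (mu0 N i) - (\<Sum>j\<in>UNIV. ee (M N i j))) = 0"
      proof (rule sum.neutral, intro ballI)
        fix i
        have m1: "mu0 N i \<le> 1" using mule[OF N, of i] True by simp
        have "(\<Sum>j\<in>UNIV. ee (M N i j)) = (\<Sum>j\<in>UNIV. real (M N i j))"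
          using Mle[OF N, of i] m1 e01 by (intro sum.cong) (auto intro: le_trans)
        also have "\<dots> = real (mu0 N i)" using assms(3)[OF N, of i] by (metis of_nat_sum)
        finally show "ee (mu0 N i) - (\<Sum>j\<in>UNIV. ee (M N i j)) = 0" using e01[OF m1] by simp
      qed
      then show ?thesis using key[OF N] True by simp
    next
      case False
      then have N2: "N \<ge> 2" using N by simp
      have lnN: "ln (real N) \<ge> 1/2"
      proof -
        have "ln (2::real) \<le> ln (real N)" using N2 by simp
        then show ?thesis using ln2_ge by simp
      qed
      define B where "B = 1 + ln (real N)"
      have eb: "\<And>k. k \<le> N \<Longrightarrow> \<bar>ee k\<bar> \<le> B" unfolding B_def using ee_bound N by fastforce
      have "\<bar>\<Sum>i\<in>UNIV. ee (mu0 N i) - (\<Sum>j\<in>UNIV. ee (M N i j))\<bar>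
           \<le> (\<Sum>i\<in>UNIV. \<bar>ee (mu0 N i) - (\<Sum>j\<in>UNIV. ee (M N i j))\<bar>)" by (rule sum_abs)
      also have "\<dots> \<le> (\<Sum>i\<in>(UNIV::'n set). B + n * B)"
      proof (rule sum_mono)
        fix i
        have "\<bar>\<Sum>j\<in>UNIV. ee (M N i j)\<bar> \<le> (\<Sum>j\<in>UNIV. \<bar>ee (M N i j)\<bar>)" by (rule sum_abs)
        also have "\<dots> \<le> (\<Sum>j\<in>(UNIV::'n set). B)"
          using eb Mle[OF N] mule[OF N] by (intro sum_mono) (meson le_trans)
        also have "\<dots> = n * B" unfolding n_def by simp
        finally have "\<bar>\<Sum>j\<in>UNIV. ee (M N i j)\<bar> \<le> n * B" .
        moreover have "\<bar>ee (mu0 N i)\<bar> \<le> B" using eb mule[OF N] by blast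
        ultimately show "\<bar>ee (mu0 N i) - (\<Sum>j\<in>UNIV. ee (M N i j))\<bar> \<le> B + n * B" by linarith
      qed
      also have "\<dots> = n * (n + 1) * B" unfolding n_def by (simp add: algebra_simps)
      also have "\<dots> \<le> n * (n + 1) * (3 * ln (real N))"
        using n1 lnN unfolding B_def by (intro mult_left_mono) auto
      finally show ?thesis using key[OF N] by (simp add: algebra_simps)
    qed
  qed
qed

end
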